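(* Let $(K,\mathrm{val})$ be a $2$-henselian valued field whose residue class field $F$ has characteristic $\neq2$, let $A$ be a subring with $B\subseteq A\subseteq K$ and $H=\mathrm{val}(A^\times)$. Then the map $$\Theta:\mathfrak X_A\to\mathcal T_F^{H\cup G_{\ge e}},\qquad \Theta(\mathcal M)=\big(M_g^A(\mathcal M)\big)_{g\in H\cup G_{\ge e}}$$ is well defined and bijective, with inverse $(M_g)_{g}\mapsto\bigcup_{g\in H\cup G_{\ge e}}\Phi^A(M_g,[\![g]\!])$.
   Context: Let $(G,\le)$ be a totally ordered abelian group written multiplicatively with identity $e$; $G_{\ge e}=\{g\in G:g\ge e\}$, $G^2=\{g^2:g\in G\}$. Let $(K,\mathrm{val})$ be a valued field with surjective valuation $\mathrm{val}:K\to G\cup\{\infty\}$, valuation ring $B=\{x:\mathrm{val}(x)\ge e\}$, residue map $\pi:B\to F$, residue field $F$. A strict unit is $x\in B^\times$ with $\pi(x)=1$; when $\mathrm{char}F\ne2$, $2$-henselian is equivalent to every strict unit being a square in $K$. For a subring $A$ with $B\subseteq A\subseteq K$ put $H=\mathrm{val}(A^\times)$; $H$ is a convex subgroup of $G$ and $\mathrm{val}(A\setminus\{0\})=H\cup G_{\ge e}$. For $g\in G$: $\overline g$ is its class in $G/G^2$, $[\![g]\!]$ its class in $G/H^2$, $[g]$ its class in $G/H$; "$\mathrm{val}(x)=\overline g$" means $\overline{\mathrm{val}(x)}=\overline g$, similarly for $[\![\cdot]\!]$. A quasi-quadratic module in a commutative ring $R$ is a subset $M\subseteq R$ with $M+M\subseteq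 M$ and $a^2M\subseteq M$ for all $a\in R$; $\mathfrak X_R$ is the set of all quasi-quadratic modules in $R$. $\mathcal T_F^{H\cup G_{\ge e}}$ is the set of families $(M_g)_{g\in H\cup G_{\ge e}}\in\prod_{g\in H\cup G_{\ge e}}\mathfrak X_F$ such that $M_g\subseteq M_h$ whenever $[\![g]\!]=[\![h]\!]$, or ($g\le h$ and $\overline g=\overline h$), or ($M_g=F$ and ($[g]=[h]$ or $g\le h$)). A pseudo-angular component map is a map $\mathrm{p.an}:K^\times\to F^\times$ such that: (1) $\mathrm{p.an}(u)=\pi(u)$ for $u\in B^\times$; (2) $\mathrm{p.an}(ux)=\pi(u)\mathrm{p.an}(x)$ for $u\in B^\times,x\in K^\times$; (3) for all $g\in G$, $c\in F^\times$ there is $w\in K$ with $\mathrm{val}(w)=g$, $\mathrm{p.an}(w)=c$; (4) for nonzero $x_1,x_2$ with $x_1+x_2\ne0$: if $\mathrm{val}(x_1)<\mathrm{val}(x_2)$ then $\mathrm{p.an}(x_1+x_2)=\mathrm{p.an}(x_1)$; if $\mathrm{val}(x_1)=\mathrm{val}(x_2)$ and $\mathrm{p.an}(x_1)+\mathrm{p.an}(x_2)\ne0$ then $\mathrm{val}(x_1+x_2)=\mathrm{val}(x_1)$ and $\mathrm{p.an}(x_1+x_2)=\mathrm{p.an}(x_1)+\mathrm{p.an}(x_2)$; (5) if $x,y\in K^\times$, $\overline{\mathrm{val}(x)}=\overline{\mathrm{val}(y)}$ and $\mathrm{p.an}(x)=\mathrm{p.an}(y)$ then $y=u^2x$ for some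 $u\in K^\times$; (6) for $a,u\in K^\times$ there is $k\in F^\times$ with $\mathrm{p.an}(au^2)=\mathrm{p.an}(a)k^2$. Such a map exists under the hypotheses; fix one. For $g\in G$ and a quasi-quadratic module $M$ in $F$: $$\Phi^A(M,[\![g]\!])=\{x\in A\setminus\{0\}:\ \mathrm{val}(x)=\overline g,\ (\mathrm{val}(x)=[\![g]\!]\ \text{or}\ \mathrm{val}(x)>g),\ \mathrm{p.an}(x)\in M\}\cup\{0\}.$$ For a quasi-quadratic module $\mathcal M$ in $A$ and $g\in G$: $M_g^A(\mathcal M)=\{\mathrm{p.an}(x):x\in\mathcal M\setminus\{0\},\ \mathrm{val}(x)=g\}\cup\{0\}$. *)

theory Defs
  imports Main "HOL-Library.FuncSet"
begin

text \<open>Multiplication, e, g^2 of the paper become +, 0, g+g.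
  The valuation is a map val :: 'k => 'g, only meaningful on nonzero elements
  (val 0 = infinity is encoded by always treating 0 separately).\<close>

definition valuation :: "('k::field \<Rightarrow> 'g::linordered_ab_group_add) \<Rightarrow> bool" where
  "valuation v \<longleftrightarrow>
     (\<forall>x y. x \<noteq> 0 \<longrightarrow> y \<noteq> 0 \<longrightarrow> v (x * y) = v x + v y) \<and>
     (\<forall>x y. x \<noteq> 0 \<longrightarrow> y \<noteq> 0 \<longrightarrow> x + y \<noteq> 0 \<longrightarrow> min (v x) (v y) \<le> v (x + y)) \<and>
     (\<forall>g. \<exists>x. x \<noteq> 0 \<and> v x = g)"

definition val_ring :: "('k::field \<Rightarrow> 'g::linordered_ab_group_add) \<Rightarrow> 'k set" where
  "val_ring v = {x. x = 0 \<or> 0 \<le> v x}"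

text \<open>pi is the residue map B -> F, where the residue field F is the whole type 'f:
  a surjective ring homomorphism on B whose kernel is the maximal ideal.\<close>
definition residue_map ::
  "('k::field \<Rightarrow> 'g::linordered_ab_group_add) \<Rightarrow> ('k \<Rightarrow> 'f::field) \<Rightarrow> bool" where
  "residue_map v \<pi> \<longleftrightarrow>
     (\<forall>x\<in>val_ring v. \<forall>y\<in>val_ring v. \<pi> (x + y) = \<pi> x + \<pi> y \<and> \<pi> (x * y) = \<pi> x * \<pi> y) \<and>
     \<pi> 1 = 1 \<and>
     (\<forall>x\<in>val_ring v. \<pi> x = 0 \<longleftrightarrow> (x = 0 \<or> 0 < v x)) \<and>
     (\<forall>c. \<exists>x\<in>val_ring v. \<pi> x = c)"

definition strict_unit :: "('k::field \<Rightarrow> 'g::linordered_ab_group_add) \<Rightarrow> ('k \<Rightarrow> 'f::field) \<Rightarrow> 'k \<Rightarrow> bool" where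
  "strict_unit v \<pi> x \<longleftrightarrow> x \<noteq> 0 \<and> v x = 0 \<and> \<pi> x = 1"

text \<open>2-henselian (in residue characteristic \<noteq> 2): every strict unit is a square.\<close>
definition two_henselian :: "('k::field \<Rightarrow> 'g::linordered_ab_group_add) \<Rightarrow> ('k \<Rightarrow> 'f::field) \<Rightarrow> bool" where
  "two_henselian v \<pi> \<longleftrightarrow> (\<forall>x. strict_unit v \<pi> x \<longrightarrow> (\<exists>y. x = y * y))"

definition subring_set :: "'k::field set \<Rightarrow> bool" where
  "subring_set A \<longleftrightarrow> 0 \<in> A \<and> 1 \<in> A \<and>
     (\<forall>x\<in>A. \<forall>y\<in>A. x + y \<in> A \<and> x * y \<in> A) \<and> (\<forall>x\<in>A. - x \<in> A)"

definition unit_vals :: "('k::field \<Rightarrow> 'g::linordered_ab_group_add) \<Rightarrow> 'k set \<Rightarrow> 'g set" where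
  "unit_vals v A = v ` {x \<in> A. x \<noteq> 0 \<and> inverse x \<in> A}"

definition same_sq_class :: "'g::linordered_ab_group_add \<Rightarrow> 'g \<Rightarrow> bool" where
  "same_sq_class g h \<longleftrightarrow> (\<exists>k. h - g = k + k)"

definition same_H2_class :: "'g::linordered_ab_group_add set \<Rightarrow> 'g \<Rightarrow> 'g \<Rightarrow> bool" where
  "same_H2_class H g h \<longleftrightarrow> (\<exists>k\<in>H. h - g = k + k)"

definition same_H_class :: "'g::linordered_ab_group_add set \<Rightarrow> 'g \<Rightarrow> 'g \<Rightarrow> bool" where
  "same_H_class H g h \<longleftrightarrow> h - g \<in> H"

definition qq_module :: "'a::comm_ring_1 set \<Rightarrow> 'a set \<Rightarrow> bool" where
  "qq_module R M \<longleftrightarrow> M \<subseteq> R \<and> 0 \<in> M \<and>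
     (\<forall>x\<in>M. \<forall>y\<in>M. x + y \<in> M) \<and> (\<forall>a\<in>R. \<forall>x\<in>M. a * a * x \<in> M)"

definition qq_modules :: "'a::comm_ring_1 set \<Rightarrow> 'a set set" where
  "qq_modules R = {M. qq_module R M}"

definition pseudo_angular ::
  "('k::field \<Rightarrow> 'g::linordered_ab_group_add) \<Rightarrow> ('k \<Rightarrow> 'f::field) \<Rightarrow> ('k \<Rightarrow> 'f) \<Rightarrow> bool" where
  "pseudo_angular v \<pi> pan \<longleftrightarrow>
     (\<forall>x. x \<noteq> 0 \<longrightarrow> pan x \<noteq> 0) \<and>
     (\<forall>u. u \<noteq> 0 \<and> v u = 0 \<longrightarrow> pan u = \<pi> u) \<and>
     (\<forall>u x. u \<noteq> 0 \<and> v u = 0 \<and> x \<noteq> 0 \<longrightarrow> pan (u * x) = \<pi> u * pan x) \<and>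
     (\<forall>g c. c \<noteq> 0 \<longrightarrow> (\<exists>w. w \<noteq> 0 \<and> v w = g \<and> pan w = c)) \<and>
     (\<forall>x1 x2. x1 \<noteq> 0 \<and> x2 \<noteq> 0 \<and> x1 + x2 \<noteq> 0 \<longrightarrow>
        (v x1 < v x2 \<longrightarrow> pan (x1 + x2) = pan x1) \<and>
        (v x1 = v x2 \<and> pan x1 + pan x2 \<noteq> 0 \<longrightarrow>
           v (x1 + x2) = v x1 \<and> pan (x1 + x2) = pan x1 + pan x2)) \<and>
     (\<forall>x y. x \<noteq> 0 \<and> y \<noteq> 0 \<and> same_sq_class (v x) (v y) \<and> pan x = pan y \<longrightarrow>
        (\<exists>u. u \<noteq> 0 \<and> y = u * u * x)) \<and>
     (\<forall>a u. a \<noteq> 0 \<and> u \<noteq> 0 \<longrightarrow> (\<exists>k. k \<noteq> 0 \<and> pan (a * u * u) = pan a * k * k))"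

definition index_set :: "('k::field \<Rightarrow> 'g::linordered_ab_group_add) \<Rightarrow> 'k set \<Rightarrow> 'g set" where
  "index_set v A = unit_vals v A \<union> {g. 0 \<le> g}"

definition fam_T ::
  "('k::field \<Rightarrow> 'g::linordered_ab_group_add) \<Rightarrow> 'k set \<Rightarrow> ('g \<Rightarrow> 'f::field set) set" where
  "fam_T v A = {M. M \<in> index_set v A \<rightarrow>\<^sub>E qq_modules (UNIV :: 'f set) \<and>
      (\<forall>g\<in>index_set v A. \<forall>h\<in>index_set v A.
         (same_H2_class (unit_vals v A) g h
          \<or> (g \<le> h \<and> same_sq_class g h)
          \<or> (M g = UNIV \<and> (same_H_class (unit_vals v A) g h \<or> g \<le> h)))
         \<longrightarrow> M g \<subseteq> M h)}"

definition Phi ::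
  "('k::field \<Rightarrow> 'g::linordered_ab_group_add) \<Rightarrow> ('k \<Rightarrow> 'f::field) \<Rightarrow> 'k set \<Rightarrow> 'f set \<Rightarrow> 'g \<Rightarrow> 'k set" where
  "Phi v pan A M g = {x \<in> A. x \<noteq> 0 \<and> same_sq_class (v x) g \<and>
      (same_H2_class (unit_vals v A) (v x) g \<or> g < v x) \<and> pan x \<in> M} \<union> {0}"

definition M_g ::
  "('k::field \<Rightarrow> 'g::linordered_ab_group_add) \<Rightarrow> ('k \<Rightarrow> 'f::field) \<Rightarrow> 'k set \<Rightarrow> 'g \<Rightarrow> 'f set" where
  "M_g v pan \<M> g = {pan x | x. x \<in> \<M> \<and> x \<noteq> 0 \<and> v x = g} \<union> {0}"

definition Theta ::
  "('k::field \<Rightarrow> 'g::linordered_ab_group_add) \<Rightarrow> ('k \<Rightarrow> 'f::field) \<Rightarrow> 'k set \<Rightarrow> 'k set \<Rightarrow> ('g \<Rightarrow> 'f set)" where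
  "Theta v pan A \<M> = (\<lambda>g\<in>index_set v A. M_g v pan \<M> g)"

definition Theta_inv ::
  "('k::field \<Rightarrow> 'g::linordered_ab_group_add) \<Rightarrow> ('k \<Rightarrow> 'f::field) \<Rightarrow> 'k set \<Rightarrow> ('g \<Rightarrow> 'f set) \<Rightarrow> 'k set" where
  "Theta_inv v pan A M = (\<Union>g\<in>index_set v A. Phi v pan A (M g) g)"

end

theory Submission
  imports Defs
begin

lemma dbl0: "(a::'g::linordered_ab_group_add) + a = 0 \<Longrightarrow> a = 0"
  by (metis add_neg_neg add_pos_pos less_irrefl linorder_neqE)
lemma dblnn: "0 \<le> (a::'g::linordered_ab_group_add) + a \<Longrightarrow> 0 \<le> a"
  by (metis add_neg_neg not_le)

lemma diff_sq: "(2::'a::field) \<noteq> 0 \<Longrightarrow>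
   ((z+1)*inverse 2)*((z+1)*inverse 2)*y + ((z-1)*inverse 2)*((z-1)*inverse 2)*(-y) = z*(y::'a)"
proof -
  assume "(2::'a) \<noteq> 0"
  then have h: "inverse 2 * 2 = (1::'a)" by (rule left_inverse)
  have gen: "\<And>hh::'a. hh * 2 = 1 \<Longrightarrow> ((z+1)*hh)*((z+1)*hh)*y + ((z-1)*hh)*((z-1)*hh)*(-y) = z*y"
    by algebra
  show ?thesis using gen[OF h] .
qed

lemma qq_univ:
  assumes "qq_module (UNIV::'f::field set) M" "c \<in> M" "-c \<in> M" "c \<noteq> 0" "(2::'f) \<noteq> 0"
  shows "M = UNIV"
proof -
  have "d \<in> M" for d
  proof -
    define e where "e = d / c"
    have "((e+1)*inverse 2)*((e+1)*inverse 2)*c + ((e-1)*inverse 2)*((e-1)*inverse 2)*(-c) = e*c"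
      using diff_sq assms(5) by blast
    also have "e*c = d" using assms(4) by (simp add: e_def)
    finally have eq: "((e+1)*inverse 2)*((e+1)*inverse 2)*c + ((e-1)*inverse 2)*((e-1)*inverse 2)*(-c) = d" .
    have sc: "\<forall>a\<in>UNIV. \<forall>x\<in>M. a*a*x \<in> M" and ad: "\<forall>x\<in>M. \<forall>y\<in>M. x + y \<in> M"
      using assms(1) unfolding qq_module_def by blast+
    have "((e+1)*inverse 2)*((e+1)*inverse 2)*c \<in> M" "((e-1)*inverse 2)*((e-1)*inverse 2)*(-c) \<in> M"
      using sc assms(2,3) by blast+
    then have "((e+1)*inverse 2)*((e+1)*inverse 2)*c + ((e-1)*inverse 2)*((e-1)*inverse 2)*(-c) \<in> M"
      using ad by blast
    then show ?thesis unfolding eq .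
  qed
  then show ?thesis by auto
qed

lemma qqD:
  assumes "qq_module R M"
  shows "M \<subseteq> R" "0 \<in> M" "x \<in> M \<Longrightarrow> y \<in> M \<Longrightarrow> x + y \<in> M" "a \<in> R \<Longrightarrow> x \<in> M \<Longrightarrow> a*a*x \<in> M"
  using assms unfolding qq_module_def by blast+

locale VF =
  fixes v :: "'k::field \<Rightarrow> 'g::linordered_ab_group_add"
    and \<pi> :: "'k \<Rightarrow> 'f::field"
    and pan :: "'k \<Rightarrow> 'f"
    and A :: "'k set"
  assumes val: "valuation v"
    and res: "residue_map v \<pi>"
    and char: "(2::'f) \<noteq> 0"
    and pan: "pseudo_angular v \<pi> pan"
    and subA: "subring_set A"
    and BA: "val_ring v \<subseteq> A"
begin

lemma vmult: "x \<noteq> 0 \<Longrightarrow> y \<noteq> 0 \<Longrightarrow> v (x*y) = v x + v y"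
  using val unfolding valuation_def by blast
lemma vadd: "x \<noteq> 0 \<Longrightarrow> y \<noteq> 0 \<Longrightarrow> x + y \<noteq> 0 \<Longrightarrow> min (v x) (v y) \<le> v (x+y)"
  using val unfolding valuation_def by blast
lemma vsurj: "\<exists>x. x \<noteq> 0 \<and> v x = g"
  using val unfolding valuation_def by blast

lemma v1: "v 1 = 0"
proof -
  have "v (1*1) = v 1 + v 1" by (rule vmult) simp_all
  then show ?thesis by simp
qed

lemma vinv: "x \<noteq> 0 \<Longrightarrow> v (inverse x) = - v x"
proof -
  assume x: "x \<noteq> 0"
  have "v (x * inverse x) = v x + v (inverse x)" by (rule vmult) (use x in simp_all)
  then have "v x + v (inverse x) = 0" using x v1 by simp
  then show ?thesis by (simp add: eq_neg_iff_add_eq_0 add.commute)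
qed

lemma vneg1: "v (-1) = 0"
proof -
  have "v ((-1)*(-1)) = v (-1) + v (-1)" by (rule vmult) simp_all
  then have "v (-1) + v (-1) = 0" using v1 by simp
  then show ?thesis by (rule dbl0)
qed

lemma vneg: "x \<noteq> 0 \<Longrightarrow> v (- x) = v x"
proof -
  assume x: "x \<noteq> 0"
  have "v ((-1)*x) = v (-1) + v x" by (rule vmult) (use x in simp_all)
  then show ?thesis using vneg1 by simp
qed

lemma vr_iff: "x \<in> val_ring v \<longleftrightarrow> x = 0 \<or> 0 \<le> v x" by (simp add: val_ring_def)

lemma pi_add: "x \<in> val_ring v \<Longrightarrow> y \<in> val_ring v \<Longrightarrow> \<pi> (x+y) = \<pi> x + \<pi> y"
  using res unfolding residue_map_def by blast
lemma pi_mult: "x \<in> val_ring v \<Longrightarrow> y \<in> val_ring v \<Longrightarrow> \<pi> (x*y) = \<pi> x * \<pi> y"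
  using res unfolding residue_map_def by blast
lemma pi1: "\<pi> 1 = 1"
  using res unfolding residue_map_def by blast
lemma pi_zero: "x \<in> val_ring v \<Longrightarrow> \<pi> x = 0 \<longleftrightarrow> (x = 0 \<or> 0 < v x)"
  using res unfolding residue_map_def by blast
lemma pi_surj: "\<exists>x\<in>val_ring v. \<pi> x = c"
  using res unfolding residue_map_def by blast
lemma pi0: "\<pi> 0 = 0"
  using pi_zero[of 0] by (simp add: vr_iff)

lemmas pd = pan[unfolded pseudo_angular_def]
lemma p_nz: "x \<noteq> 0 \<Longrightarrow> pan x \<noteq> 0"
  using pd[THEN conjunct1] by blast
lemma p_mult: "u \<noteq> 0 \<Longrightarrow> v u = 0 \<Longrightarrow> x \<noteq> 0 \<Longrightarrow> pan (u * x) = \<pi> u * pan x"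
  using pd[THEN conjunct2, THEN conjunct2, THEN conjunct1] by blast
lemma p_ex: "c \<noteq> 0 \<Longrightarrow> \<exists>w. w \<noteq> 0 \<and> v w = g \<and> pan w = c"
  using pd[THEN conjunct2, THEN conjunct2, THEN conjunct2, THEN conjunct1] by blast
lemma p45: "\<forall>x1 x2. x1 \<noteq> 0 \<and> x2 \<noteq> 0 \<and> x1 + x2 \<noteq> 0 \<longrightarrow>
        (v x1 < v x2 \<longrightarrow> pan (x1 + x2) = pan x1) \<and>
        (v x1 = v x2 \<and> pan x1 + pan x2 \<noteq> 0 \<longrightarrow>
           v (x1 + x2) = v x1 \<and> pan (x1 + x2) = pan x1 + pan x2)"
  using pd[THEN conjunct2, THEN conjunct2, THEN conjunct2, THEN conjunct2, THEN conjunct1] .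
lemma p_lt: "x1 \<noteq> 0 \<Longrightarrow> x2 \<noteq> 0 \<Longrightarrow> x1 + x2 \<noteq> 0 \<Longrightarrow> v x1 < v x2 \<Longrightarrow> pan (x1 + x2) = pan x1"
  using p45 by blast
lemma p_eq: "x1 \<noteq> 0 \<Longrightarrow> x2 \<noteq> 0 \<Longrightarrow> x1 + x2 \<noteq> 0 \<Longrightarrow> v x1 = v x2 \<Longrightarrow> pan x1 + pan x2 \<noteq> 0 \<Longrightarrow>
    v (x1 + x2) = v x1 \<and> pan (x1 + x2) = pan x1 + pan x2"
  using p45 by blast
lemma p5: "x \<noteq> 0 \<Longrightarrow> y \<noteq> 0 \<Longrightarrow> same_sq_class (v x) (v y) \<Longrightarrow> pan x = pan y \<Longrightarrow>
    \<exists>u. u \<noteq> 0 \<and> y = u * u * x"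
  using pd[THEN conjunct2, THEN conjunct2, THEN conjunct2, THEN conjunct2, THEN conjunct2, THEN conjunct1] by blast
lemma p6: "a \<noteq> 0 \<Longrightarrow> u \<noteq> 0 \<Longrightarrow> \<exists>k. k \<noteq> 0 \<and> pan (a * u * u) = pan a * k * k"
  using pd[THEN conjunct2, THEN conjunct2, THEN conjunct2, THEN conjunct2, THEN conjunct2, THEN conjunct2] by blast

lemma unit_ex: "c \<noteq> 0 \<Longrightarrow> \<exists>u. u \<noteq> 0 \<and> v u = 0 \<and> \<pi> u = c"
proof -
  assume c: "c \<noteq> 0"
  obtain x where x: "x \<in> val_ring v" "\<pi> x = c" using pi_surj by blast
  have "x \<noteq> 0" using x c pi0 by auto
  moreover have "\<not> 0 < v x" using x c pi_zero by auto
  ultimately have "v x = 0" using x(1) by (auto simp: vr_iff)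
  then show ?thesis using x \<open>x \<noteq> 0\<close> by blast
qed

lemma pi_neg1: "\<pi> (-1) = -1"
proof -
  have m: "-1 \<in> val_ring v" using vneg1 vr_iff by simp
  have "\<pi> (1 + -1) = \<pi> 1 + \<pi> (-1)" by (rule pi_add) (use m in \<open>simp_all add: vr_iff v1\<close>)
  then have "0 = 1 + \<pi> (-1)" using pi0 pi1 by simp
  then show ?thesis by (simp add: eq_neg_iff_add_eq_0 add.commute)
qed

lemma pan_neg: "x \<noteq> 0 \<Longrightarrow> pan (- x) = - pan x"
proof -
  assume x: "x \<noteq> 0"
  have "pan ((-1) * x) = \<pi> (-1) * pan x" by (rule p_mult) (use x vneg1 in simp_all)
  then show ?thesis using pi_neg1 by simp
qed

lemma ultra_lt: "x \<noteq> 0 \<Longrightarrow> y \<noteq> 0 \<Longrightarrow> x + y \<noteq> 0 \<Longrightarrow> v x < v y \<Longrightarrow> v (x + y) = v x"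
proof -
  assume x: "x \<noteq> 0" and y: "y \<noteq> 0" and s: "x + y \<noteq> 0" and lt: "v x < v y"
  have 1: "v x \<le> v (x+y)" using vadd[OF x y s] lt by simp
  have "min (v (x+y)) (v (-y)) \<le> v ((x+y) + (-y))" by (rule vadd) (use x y s in simp_all)
  then have "min (v (x+y)) (v y) \<le> v x" using vneg[OF y] by simp
  then have "v (x+y) \<le> v x" using lt by (auto simp: min_def split: if_splits)
  then show ?thesis using 1 by simp
qed

lemma two_props: "(2::'k) \<noteq> 0 \<and> inverse (2::'k) \<in> A"
proof -
  have one: "(1::'k) \<in> val_ring v" by (simp add: vr_iff v1)
  have p2: "\<pi> (1 + 1) = 1 + 1" using pi_add[OF one one] pi1 by simp
  have c2: "(1 + 1 :: 'f) \<noteq> 0" using char by simp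
  have nz: "(1 + 1::'k) \<noteq> 0"
  proof
    assume "(1 + 1::'k) = 0"
    then have "\<pi> (1 + 1) = 0" using pi0 by simp
    then show False using p2 c2 by simp
  qed
  have "min (v 1) (v 1) \<le> v (1 + (1::'k))" by (rule vadd) (use nz in simp_all)
  then have ge: "0 \<le> v (1 + (1::'k))" by (simp add: v1)
  then have m: "(1 + 1 :: 'k) \<in> val_ring v" by (simp add: vr_iff)
  have iff: "\<pi> (1 + 1) = 0 \<longleftrightarrow> (1 + 1 = (0::'k) \<or> 0 < v (1 + (1::'k)))" by (rule pi_zero[OF m])
  have "\<not> 0 < v (1 + (1::'k))"
  proof
    assume "0 < v (1 + (1::'k))"
    then have "\<pi> (1 + 1) = 0" using iff by blast
    then have "(1 + 1 :: 'f) = 0" using p2 by (simp only:)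
    then show False using c2 by blast
  qed
  then have "v (1 + (1::'k)) = 0" using ge by (metis antisym not_less)
  then have "v (inverse (1 + (1::'k))) = 0" using vinv[OF nz] by simp
  then have "inverse (1 + (1::'k)) \<in> A" using BA nz by (auto simp: vr_iff)
  moreover have eq: "(2::'k) = 1 + 1" by simp
  ultimately show ?thesis using nz unfolding eq by blast
qed

lemma A0: "0 \<in> A" using subA unfolding subring_set_def by blast
lemma A1: "1 \<in> A" using subA unfolding subring_set_def by blast
lemma Aadd: "x \<in> A \<Longrightarrow> y \<in> A \<Longrightarrow> x + y \<in> A" using subA unfolding subring_set_def by blast
lemma Amult: "x \<in> A \<Longrightarrow> y \<in> A \<Longrightarrow> x * y \<in> A" using subA unfolding subring_set_def by blast
lemma Aneg: "x \<in> A \<Longrightarrow> - x \<in> A" using subA unfolding subring_set_def by blast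
lemma Adiff: "x \<in> A \<Longrightarrow> y \<in> A \<Longrightarrow> x - y \<in> A" using Aadd Aneg by (metis diff_conv_add_uminus)

lemma vrA: "x \<noteq> 0 \<Longrightarrow> 0 \<le> v x \<Longrightarrow> x \<in> A" using BA by (auto simp: vr_iff)

lemma idx_A: "x \<in> A \<Longrightarrow> x \<noteq> 0 \<Longrightarrow> v x \<in> index_set v A"
proof -
  assume x: "x \<in> A" "x \<noteq> 0"
  show ?thesis
  proof (cases "0 \<le> v x")
    case True then show ?thesis by (simp add: index_set_def)
  next
    case False
    have "v (inverse x) = - v x" using vinv x by simp
    then have "inverse x \<in> A" using False x by (intro vrA) auto
    then show ?thesis using x unfolding index_set_def unit_vals_def by blast
  qed
qed

lemma H0: "0 \<in> unit_vals v A"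
  unfolding unit_vals_def using A1 v1 by force

lemma H_elt: "k \<in> unit_vals v A \<Longrightarrow> \<exists>y. y \<in> A \<and> y \<noteq> 0 \<and> v y = k"
  unfolding unit_vals_def by blast

lemma nn_elt: "0 \<le> k \<Longrightarrow> \<exists>y. y \<in> A \<and> y \<noteq> 0 \<and> v y = k"
proof -
  assume k: "0 \<le> k"
  obtain x where x: "x \<noteq> 0" "v x = k" using vsurj by blast
  then show ?thesis using vrA k by blast
qed

lemma A_idx: "w \<noteq> 0 \<Longrightarrow> v w \<in> index_set v A \<Longrightarrow> w \<in> A"
proof -
  assume w: "w \<noteq> 0" "v w \<in> index_set v A"
  show ?thesis
  proof (cases "0 \<le> v w")
    case True then show ?thesis using w vrA by blast
  next
    case False
    then obtain y where y: "y \<in> A" "y \<noteq> 0" "v y = v w"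
      using w H_elt unfolding index_set_def by auto
    have iy: "inverse y \<noteq> 0" using y by simp
    have "v (w * inverse y) = v w + v (inverse y)" using vmult w iy by blast
    also have "\<dots> = 0" using vinv y by simp
    finally have "w * inverse y \<in> A" using w y by (intro vrA) auto
    then have "y * (w * inverse y) \<in> A" using Amult y by blast
    moreover have "y * (w * inverse y) = w" using y(2) by (simp add: field_simps)
    ultimately show ?thesis by simp
  qed
qed

lemma vuu0: "u \<noteq> 0 \<Longrightarrow> v (u*u) = 0 \<Longrightarrow> v u = 0"
  using vmult[of u u] dbl0 by simp

lemma sq_unit: assumes x: "x \<noteq> 0" and y: "y \<noteq> 0" and e: "v x = v y" and p: "pan x = pan y"
  shows "\<exists>u. u \<in> A \<and> u \<noteq> 0 \<and> v u = 0 \<and> y = u*u*x"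
proof -
  have "same_sq_class (v x) (v y)" unfolding same_sq_class_def using e by (intro exI[of _ 0]) simp
  then obtain u where u: "u \<noteq> 0" "y = u*u*x" using p5[OF x y _ p] by blast
  have uu: "u*u \<noteq> 0" using u by simp
  have "v y = v (u*u) + v x" using u vmult[OF uu x] by simp
  then have "v (u*u) = 0" using e by simp
  then have vu: "v u = 0" using vuu0 u by blast
  then have "u \<in> A" using u vrA by simp
  then show ?thesis using u vu by blast
qed

lemma Mg_mem: "x \<in> MM \<Longrightarrow> x \<noteq> 0 \<Longrightarrow> v x = g \<Longrightarrow> pan x \<in> M_g v pan MM g"
  unfolding M_g_def by blast
lemma Mg_cases: "c \<in> M_g v pan MM g \<Longrightarrow> c = 0 \<or> (\<exists>x. x \<in> MM \<and> x \<noteq> 0 \<and> v x = g \<and> pan x = c)"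
  unfolding M_g_def by blast
lemma Mg0: "0 \<in> M_g v pan MM g" unfolding M_g_def by blast

lemma Mg_qq: assumes MM: "qq_module A MM" shows "qq_module UNIV (M_g v pan MM g)"
proof -
  have add: "c + d \<in> M_g v pan MM g" if c: "c \<in> M_g v pan MM g" and d: "d \<in> M_g v pan MM g" for c d
  proof -
    consider "c = 0" | "d = 0" | x y where "x \<in> MM" "x\<noteq>0" "v x = g" "pan x = c" "y \<in> MM" "y \<noteq>0" "v y = g" "pan y = d"
      using Mg_cases[OF c] Mg_cases[OF d] by blast
    then show ?thesis
    proof cases
      case 1 then show ?thesis using d by simp
    next
      case 2 then show ?thesis using c by simp
    next
      case 3
      show ?thesis
      proof (cases "c + d = 0")
        case True then show ?thesis using Mg0 by simp
      next
        case False
        have s: "x + y \<noteq> 0"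
        proof
          assume "x + y = 0"
          then have "y = - x" by (simp add: eq_neg_iff_add_eq_0 add.commute)
          then have "pan y = - pan x" using pan_neg 3 by simp
          then show False using False 3 by simp
        qed
        have "v (x+y) = v x \<and> pan (x+y) = pan x + pan y" by (rule p_eq) (use 3 s False in auto)
        moreover have "x + y \<in> MM" using qqD(3)[OF MM] 3 by blast
        ultimately show ?thesis using Mg_mem[of "x+y" MM g] 3 s by simp
      qed
    qed
  qed
  have sc: "a*a*c \<in> M_g v pan MM g" if c: "c \<in> M_g v pan MM g" for a c
  proof (cases "a = 0 \<or> c = 0")
    case True then show ?thesis using Mg0 by auto
  next
    case False
    obtain x where x: "x \<in> MM" "x \<noteq> 0" "v x = g" "pan x = c" using Mg_cases[OF c] False by blast
    obtain u where u: "u \<noteq> 0" "v u = 0" "\<pi> u = a" using unit_ex False by blast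
    have uA: "u \<in> A" using vrA u by simp
    have uv: "u \<in> val_ring v" using u by (simp add: vr_iff)
    have uu: "u*u \<noteq> 0" "v (u*u) = 0" using vmult u by simp_all
    have m: "u*u*x \<in> MM" using qqD(4)[OF MM uA x(1)] .
    have "pan (u*u*x) = \<pi> (u*u) * pan x" by (rule p_mult) (use uu x in auto)
    also have "\<pi> (u*u) = a*a" using pi_mult[OF uv uv] u by simp
    finally have pe: "pan (u*u*x) = a*a*c" using x by simp
    have "v (u*u*x) = v (u*u) + v x" using vmult uu x by blast
    then have "v (u*u*x) = g" using uu x by simp
    then show ?thesis using Mg_mem[OF m _ ] pe uu x by simp
  qed
  show ?thesis unfolding qq_module_def using add sc Mg0 by blast
qed

lemma Mg_shift: assumes MM: "qq_module A MM" and y: "y \<in> A" "y \<noteq> 0" and h: "h = g + (v y + v y)"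
  shows "M_g v pan MM g \<subseteq> M_g v pan MM h"
proof
  fix c assume c: "c \<in> M_g v pan MM g"
  show "c \<in> M_g v pan MM h"
  proof (cases "c = 0")
    case True then show ?thesis using Mg0 by simp
  next
    case False
    obtain x where x: "x \<in> MM" "x \<noteq> 0" "v x = g" "pan x = c" using Mg_cases[OF c] False by blast
    obtain k where k: "k \<noteq> 0" "pan (x*y*y) = pan x * k * k" using p6 x y by blast
    have e: "x*y*y = y*y*x" by (simp add: ac_simps)
    have m: "x*y*y \<in> MM" unfolding e by (rule qqD(4)[OF MM y(1) x(1)])
    have nz: "x*y*y \<noteq> 0" using x y by simp
    have "v (x*y*y) = v (x*y) + v y" using vmult x y by simp
    also have "\<dots> = v x + v y + v y" using vmult x y by simp
    finally have "v (x*y*y) = h" using h x by (simp add: ac_simps)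
    then have "pan x * k * k \<in> M_g v pan MM h" using Mg_mem[OF m nz] k by simp
    then have "inverse k * inverse k * (pan x * k * k) \<in> M_g v pan MM h"
      using qqD(4)[OF Mg_qq[OF MM]] by blast
    moreover have "inverse k * inverse k * (pan x * k * k) = c" using k x by (simp add: field_simps)
    ultimately show ?thesis by simp
  qed
qed

lemma Mg_univ: assumes MM: "qq_module A MM" and U: "M_g v pan MM g = UNIV"
  and z: "z \<in> A" "z \<noteq> 0" and h: "h = g + v z"
  shows "M_g v pan MM h = UNIV"
proof -
  have inM: "y \<in> MM" if y: "y \<noteq> 0" "v y = g" for y
  proof -
    have "pan y \<in> M_g v pan MM g" using U by simp
    then obtain x where x: "x \<in> MM" "x \<noteq> 0" "v x = g" "pan x = pan y"
      using Mg_cases p_nz y by blast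
    obtain u where u: "u \<in> A" "y = u*u*x" using sq_unit[OF x(2) y(1)] x y by auto
    show ?thesis using qqD(4)[OF MM u(1) x(1)] u by simp
  qed
  have tw: "(2::'k) \<noteq> 0" "inverse (2::'k) \<in> A" using two_props by auto
  have "c \<in> M_g v pan MM h" for c
  proof (cases "c = 0")
    case True then show ?thesis using Mg0 by simp
  next
    case False
    obtain w where w: "w \<noteq> 0" "v w = h" "pan w = c" using p_ex False by blast
    define y where "y = w * inverse z"
    have iz: "inverse z \<noteq> 0" using z by simp
    have yn: "y \<noteq> 0" using w z by (simp add: y_def)
    have "v y = v w + v (inverse z)" unfolding y_def using vmult w iz by blast
    then have vy: "v y = g" using vinv z w h by simp
    have yM: "y \<in> MM" using inM yn vy by blast
    have nyM: "- y \<in> MM" using inM yn vy vneg by simp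
    define a where "a = (z+1)*inverse 2"
    define b where "b = (z-1)*inverse 2"
    have aA: "a \<in> A" unfolding a_def using Amult Aadd z A1 tw by blast
    have bA: "b \<in> A" unfolding b_def using Amult Adiff z A1 tw by blast
    have "a*a*y + b*b*(-y) \<in> MM" using qqD(3,4)[OF MM] aA bA yM nyM by blast
    moreover have "a*a*y + b*b*(-y) = z*y" unfolding a_def b_def by (rule diff_sq[OF tw(1)])
    moreover have "z*y = w" using z by (simp add: y_def)
    ultimately have "w \<in> MM" by simp
    then show ?thesis using Mg_mem w by blast
  qed
  then show ?thesis by blast
qed

lemma Theta_at: "g \<in> index_set v A \<Longrightarrow> Theta v pan A MM g = M_g v pan MM g"
  by (simp add: Theta_def)

lemma H_neg: "k \<in> unit_vals v A \<Longrightarrow> - k \<in> unit_vals v A"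
proof -
  assume "k \<in> unit_vals v A"
  then obtain y where y: "y \<in> A" "y \<noteq> 0" "inverse y \<in> A" "v y = k" unfolding unit_vals_def by blast
  then have "v (inverse y) = - k" using vinv by simp
  then show ?thesis unfolding unit_vals_def using y by force
qed

lemma diff_eq: "h - g = (k::'g) + k \<Longrightarrow> h = g + (k + k)"
  by (metis add.commute diff_add_cancel)

lemma Theta_in: assumes MM: "qq_module A MM" shows "Theta v pan A MM \<in> fam_T v A"
proof -
  have pie: "Theta v pan A MM \<in> index_set v A \<rightarrow>\<^sub>E qq_modules (UNIV :: 'f set)"
    unfolding Theta_def using Mg_qq[OF MM] by (simp add: qq_modules_def)
  have cond: "M_g v pan MM g \<subseteq> M_g v pan MM h"
    if g: "g \<in> index_set v A" and hI: "h \<in> index_set v A" and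
      d: "same_H2_class (unit_vals v A) g h \<or> (g \<le> h \<and> same_sq_class g h)
          \<or> (M_g v pan MM g = UNIV \<and> (same_H_class (unit_vals v A) g h \<or> g \<le> h))" for g h
  proof -
    consider "same_H2_class (unit_vals v A) g h" | "g \<le> h \<and> same_sq_class g h"
      | "M_g v pan MM g = UNIV \<and> (same_H_class (unit_vals v A) g h \<or> g \<le> h)" using d by blast
    then show ?thesis
    proof cases
      case 1
      then obtain k where k: "k \<in> unit_vals v A" "h - g = k + k" unfolding same_H2_class_def by blast
      obtain y where y: "y \<in> A" "y \<noteq> 0" "v y = k" using H_elt k by blast
      show ?thesis by (rule Mg_shift[OF MM y(1,2)]) (use diff_eq k y in simp)
    next
      case 2
      then obtain k where k: "h - g = k + k" unfolding same_sq_class_def by blast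
      have "0 \<le> k + k" using 2 k by (metis diff_ge_0_iff_ge)
      then have "0 \<le> k" by (rule dblnn)
      then obtain y where y: "y \<in> A" "y \<noteq> 0" "v y = k" using nn_elt by blast
      show ?thesis by (rule Mg_shift[OF MM y(1,2)]) (use diff_eq k y in simp)
    next
      case 3
      obtain z where z: "z \<in> A" "z \<noteq> 0" "v z = h - g"
      proof -
        from 3 consider "h - g \<in> unit_vals v A" | "g \<le> h" unfolding same_H_class_def by blast
        then show ?thesis
        proof cases
          case 1 then show ?thesis using H_elt that by blast
        next
          case 2 then have "0 \<le> h - g" by simp
          then show ?thesis using nn_elt that by blast
        qed
      qed
      have "M_g v pan MM h = UNIV" by (rule Mg_univ[OF MM _ z(1,2)]) (use 3 z in auto)
      then show ?thesis by simp
    qed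
  qed
  show ?thesis unfolding fam_T_def
  proof (intro CollectI conjI pie ballI impI)
    fix g h assume g: "g \<in> index_set v A" and h: "h \<in> index_set v A"
      and d: "same_H2_class (unit_vals v A) g h \<or> g \<le> h \<and> same_sq_class g h \<or>
          Theta v pan A MM g = UNIV \<and> (same_H_class (unit_vals v A) g h \<or> g \<le> h)"
    show "Theta v pan A MM g \<subseteq> Theta v pan A MM h"
      using cond[OF g h] d unfolding Theta_at[OF g] Theta_at[OF h] by blast
  qed
qed

definition SS :: "('g \<Rightarrow> 'f set) \<Rightarrow> 'k set" where
  "SS M = {x \<in> A. x = 0 \<or> pan x \<in> M (v x)}"

lemma famD: "M \<in> fam_T v A \<Longrightarrow> g \<in> index_set v A \<Longrightarrow> qq_module UNIV (M g)"
  unfolding fam_T_def qq_modules_def by (auto dest: PiE_mem)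
lemma famE: "M \<in> fam_T v A \<Longrightarrow> g \<notin> index_set v A \<Longrightarrow> M g = undefined"
  unfolding fam_T_def by (auto dest: PiE_arb)
lemma famC: "M \<in> fam_T v A \<Longrightarrow> g \<in> index_set v A \<Longrightarrow> h \<in> index_set v A \<Longrightarrow>
   same_H2_class (unit_vals v A) g h \<or> (g \<le> h \<and> same_sq_class g h)
          \<or> (M g = UNIV \<and> (same_H_class (unit_vals v A) g h \<or> g \<le> h)) \<Longrightarrow> M g \<subseteq> M h"
  unfolding fam_T_def by blast

lemma idx0: "0 \<in> index_set v A" by (simp add: index_set_def)

lemma Tinv_eq: assumes M: "M \<in> fam_T v A" shows "Theta_inv v pan A M = SS M"
proof
  show "Theta_inv v pan A M \<subseteq> SS M"
  proof
    fix x assume "x \<in> Theta_inv v pan A M"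
    then obtain g where g: "g \<in> index_set v A" and x: "x \<in> Phi v pan A (M g) g"
      unfolding Theta_inv_def by blast
    show "x \<in> SS M"
    proof (cases "x = 0")
      case True then show ?thesis using A0 by (simp add: SS_def)
    next
      case False
      then have xA: "x \<in> A" and sq: "same_sq_class (v x) g"
        and d: "same_H2_class (unit_vals v A) (v x) g \<or> g < v x" and p: "pan x \<in> M g"
        using x unfolding Phi_def by blast+
      have vI: "v x \<in> index_set v A" using idx_A xA False by blast
      have "same_H2_class (unit_vals v A) g (v x) \<or> (g \<le> v x \<and> same_sq_class g (v x))"
      proof -
        from sq obtain k where k: "g - v x = k + k" unfolding same_sq_class_def by blast
        have k2: "v x - g = (-k) + (-k)" using k by (metis minus_add_distrib minus_diff_eq)
        from d show ?thesis
        proof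
          assume "same_H2_class (unit_vals v A) (v x) g"
          then obtain j where j: "j \<in> unit_vals v A" "g - v x = j + j" unfolding same_H2_class_def by blast
          have "v x - g = (-j) + (-j)" using j by (metis minus_add_distrib minus_diff_eq)
          then show ?thesis using H_neg[OF j(1)] unfolding same_H2_class_def by blast
        next
          assume "g < v x"
          then have "g \<le> v x" by simp
          moreover have "same_sq_class g (v x)" unfolding same_sq_class_def using k2 by blast
          ultimately show ?thesis by blast
        qed
      qed
      then have "M g \<subseteq> M (v x)" using famC[OF M g vI] by blast
      then have "pan x \<in> M (v x)" using p by blast
      then show ?thesis using xA by (simp add: SS_def)
    qed
  qed
next
  show "SS M \<subseteq> Theta_inv v pan A M"
  proof
    fix x assume x: "x \<in> SS M"
    show "x \<in> Theta_inv v pan A M"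
    proof (cases "x = 0")
      case True then show ?thesis unfolding Theta_inv_def Phi_def using idx0 by blast
    next
      case False
      then have xA: "x \<in> A" and p: "pan x \<in> M (v x)" using x by (auto simp: SS_def)
      have vI: "v x \<in> index_set v A" using idx_A xA False by blast
      have "same_sq_class (v x) (v x)" unfolding same_sq_class_def by (intro exI[of _ 0]) simp
      moreover have "same_H2_class (unit_vals v A) (v x) (v x)" unfolding same_H2_class_def
        using H0 by (intro bexI[of _ 0]) simp_all
      ultimately have "x \<in> Phi v pan A (M (v x)) (v x)" unfolding Phi_def using xA False p by blast
      then show ?thesis unfolding Theta_inv_def using vI by blast
    qed
  qed
qed

lemma SS_qq: assumes M: "M \<in> fam_T v A" shows "qq_module A (SS M)"
proof -
  have sub: "SS M \<subseteq> A" by (auto simp: SS_def)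
  have z: "0 \<in> SS M" using A0 by (simp add: SS_def)
  have sc: "a*a*x \<in> SS M" if a: "a \<in> A" and x: "x \<in> SS M" for a x
  proof (cases "a = 0 \<or> x = 0")
    case True then show ?thesis using z by auto
  next
    case False
    have xA: "x \<in> A" and p: "pan x \<in> M (v x)" using x False by (auto simp: SS_def)
    have aaxA: "a*a*x \<in> A" using Amult a xA by blast
    have nz: "a*a*x \<noteq> 0" using False by simp
    obtain k where k: "k \<noteq> 0" "pan (x*a*a) = pan x * k * k" using p6 False by blast
    have e: "x*a*a = a*a*x" by (simp add: ac_simps)
    have vxI: "v x \<in> index_set v A" using idx_A xA False by blast
    have vaI: "v a \<in> index_set v A" using idx_A a False by blast
    have vI: "v (a*a*x) \<in> index_set v A" using idx_A aaxA nz by blast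
    have "v (a*a*x) = v (a*a) + v x" using vmult False by simp
    also have "\<dots> = v x + (v a + v a)" using vmult False by (simp add: ac_simps)
    finally have va: "v (a*a*x) - v x = v a + v a" by simp
    have "same_H2_class (unit_vals v A) (v x) (v (a*a*x)) \<or> (v x \<le> v (a*a*x) \<and> same_sq_class (v x) (v (a*a*x)))"
    proof (cases "v a \<in> unit_vals v A")
      case True then show ?thesis using va unfolding same_H2_class_def by blast
    next
      case False
      then have "0 \<le> v a" using vaI unfolding index_set_def by blast
      then have "0 \<le> v a + v a" by simp
      then have "v x \<le> v (a*a*x)" using va by (metis diff_ge_0_iff_ge)
      then show ?thesis using va unfolding same_sq_class_def by blast
    qed
    then have sub2: "M (v x) \<subseteq> M (v (a*a*x))" using famC[OF M vxI vI] by blast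
    have "k*k*pan x \<in> M (v x)" using qqD(4)[OF famD[OF M vxI]] p by blast
    then have "k*k*pan x \<in> M (v (a*a*x))" using sub2 by blast
    moreover have "pan (a*a*x) = k*k*pan x" using k e by (simp add: ac_simps)
    ultimately have "pan (a*a*x) \<in> M (v (a*a*x))" by simp
    then show ?thesis using aaxA by (simp add: SS_def)
  qed
  have ad: "x + y \<in> SS M" if x: "x \<in> SS M" and y: "y \<in> SS M" for x y
  proof -
    have addA: "x + y \<in> A" using x y Aadd by (auto simp: SS_def)
    show ?thesis
    proof (cases "x = 0 \<or> y = 0 \<or> x + y = 0")
      case True then show ?thesis using x y addA by (auto simp: SS_def)
    next
      case False
      have xA: "x \<in> A" and px: "pan x \<in> M (v x)" using x False by (auto simp: SS_def)
      have yA: "y \<in> A" and py: "pan y \<in> M (v y)" using y False by (auto simp: SS_def)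
      have vxI: "v x \<in> index_set v A" using idx_A xA False by blast
      have vsI: "v (x+y) \<in> index_set v A" using idx_A addA False by blast
      consider "v x < v y" | "v y < v x" | "v x = v y" by fastforce
      then show ?thesis
      proof cases
        case 1
        have "v (x+y) = v x" "pan (x+y) = pan x" using ultra_lt p_lt False 1 by blast+
        then show ?thesis using px addA by (simp add: SS_def)
      next
        case 2
        have f: "y + x \<noteq> 0" using False by (simp add: add.commute)
        have "v (y+x) = v y" "pan (y+x) = pan y" using ultra_lt p_lt False f 2 by blast+
        then show ?thesis using py addA by (simp add: SS_def add.commute)
      next
        case 3
        show ?thesis
        proof (cases "pan x + pan y = 0")
          case False2: False
          have "v (x+y) = v x \<and> pan (x+y) = pan x + pan y" using p_eq False 3 False2 by blast
          moreover have "pan x + pan y \<in> M (v x)" using qqD(3)[OF famD[OF M vxI]] px py 3 by simp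
          ultimately show ?thesis using addA by (simp add: SS_def)
        next
          case True
          then have "pan y = - pan x" by (simp add: eq_neg_iff_add_eq_0 add.commute)
          then have "- pan x \<in> M (v x)" using py 3 by simp
          then have U: "M (v x) = UNIV" using qq_univ[OF famD[OF M vxI] px _ p_nz char] False by blast
          have "min (v x) (v y) \<le> v (x+y)" using vadd False by blast
          then have "v x \<le> v (x+y)" using 3 by simp
          then have "M (v x) \<subseteq> M (v (x+y))" using famC[OF M vxI vsI] U by blast
          then have "pan (x+y) \<in> M (v (x+y))" using U by blast
          then show ?thesis using addA by (simp add: SS_def)
        qed
      qed
    qed
  qed
  show ?thesis unfolding qq_module_def using sub z sc ad by blast
qed

lemma Theta_SS: assumes M: "M \<in> fam_T v A" shows "Theta v pan A (SS M) = M"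
proof
  fix g
  show "Theta v pan A (SS M) g = M g"
  proof (cases "g \<in> index_set v A")
    case False then show ?thesis using famE[OF M False] by (simp add: Theta_def)
  next
    case True
    have "M_g v pan (SS M) g = M g"
    proof
      show "M_g v pan (SS M) g \<subseteq> M g"
      proof
        fix c assume "c \<in> M_g v pan (SS M) g"
        then consider "c = 0" | x where "x \<in> SS M" "x \<noteq> 0" "v x = g" "pan x = c" using Mg_cases by blast
        then show "c \<in> M g"
        proof cases
          case 1 then show ?thesis using qqD(2)[OF famD[OF M True]] by simp
        next
          case 2 then show ?thesis by (auto simp: SS_def)
        qed
      qed
    next
      show "M g \<subseteq> M_g v pan (SS M) g"
      proof
        fix c assume c: "c \<in> M g"
        show "c \<in> M_g v pan (SS M) g"
        proof (cases "c = 0")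
          case True then show ?thesis using Mg0 by simp
        next
          case False
          obtain w where w: "w \<noteq> 0" "v w = g" "pan w = c" using p_ex False by blast
          have "w \<in> A" using A_idx w True by simp
          then have "w \<in> SS M" using w c by (simp add: SS_def)
          then show ?thesis using Mg_mem w by blast
        qed
      qed
    qed
    then show ?thesis using Theta_at[OF True] by simp
  qed
qed

lemma SS_Theta: assumes MM: "qq_module A MM" shows "SS (Theta v pan A MM) = MM"
proof
  show "MM \<subseteq> SS (Theta v pan A MM)"
  proof
    fix x assume x: "x \<in> MM"
    have xA: "x \<in> A" using qqD(1)[OF MM] x by blast
    show "x \<in> SS (Theta v pan A MM)"
    proof (cases "x = 0")
      case True then show ?thesis using xA by (simp add: SS_def)
    next
      case False
      have vI: "v x \<in> index_set v A" using idx_A xA False by blast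
      have "pan x \<in> M_g v pan MM (v x)" using Mg_mem x False by blast
      then show ?thesis using xA Theta_at[OF vI] by (simp add: SS_def)
    qed
  qed
next
  show "SS (Theta v pan A MM) \<subseteq> MM"
  proof
    fix x assume x: "x \<in> SS (Theta v pan A MM)"
    show "x \<in> MM"
    proof (cases "x = 0")
      case True then show ?thesis using qqD(2)[OF MM] by simp
    next
      case False
      have xA: "x \<in> A" using x by (simp add: SS_def)
      have vI: "v x \<in> index_set v A" using idx_A xA False by blast
      have "pan x \<in> M_g v pan MM (v x)" using x False Theta_at[OF vI] by (simp add: SS_def)
      then obtain y where y: "y \<in> MM" "y \<noteq> 0" "v y = v x" "pan y = pan x"
        using Mg_cases p_nz False by blast
      obtain u where u: "u \<in> A" "x = u*u*y" using sq_unit[OF y(2) False y(3,4)] by blast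
      show ?thesis using qqD(4)[OF MM u(1) y(1)] u by simp
    qed
  qed
qed

lemma main:
  "bij_betw (Theta v pan A) (qq_modules A) (fam_T v A)
    \<and> (\<forall>M\<in>fam_T v A. Theta_inv v pan A M \<in> qq_modules A \<and> Theta v pan A (Theta_inv v pan A M) = M)
    \<and> (\<forall>\<M>\<in>qq_modules A. Theta_inv v pan A (Theta v pan A \<M>) = \<M>)"
proof -
  have r: "\<forall>M\<in>fam_T v A. Theta_inv v pan A M \<in> qq_modules A \<and> Theta v pan A (Theta_inv v pan A M) = M"
    using Tinv_eq SS_qq Theta_SS by (simp add: qq_modules_def)
  have l: "\<forall>\<M>\<in>qq_modules A. Theta_inv v pan A (Theta v pan A \<M>) = \<M>"
    using Tinv_eq Theta_in SS_Theta by (simp add: qq_modules_def)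
  have "bij_betw (Theta v pan A) (qq_modules A) (fam_T v A)"
  proof (rule bij_betw_byWitness[where f'="Theta_inv v pan A"])
    show "\<forall>a\<in>qq_modules A. Theta_inv v pan A (Theta v pan A a) = a" using l .
    show "\<forall>a'\<in>fam_T v A. Theta v pan A (Theta_inv v pan A a') = a'" using r by blast
    show "Theta v pan A ` qq_modules A \<subseteq> fam_T v A" using Theta_in by (auto simp: qq_modules_def)
    show "Theta_inv v pan A ` fam_T v A \<subseteq> qq_modules A" using r by blast
  qed
  then show ?thesis using r l by blast
qed

end

theorem mainTheorem10:
  fixes v :: "'k::field \<Rightarrow> 'g::linordered_ab_group_add"
    and \<pi> :: "'k \<Rightarrow> 'f::field"
    and pan :: "'k \<Rightarrow> 'f"
    and A :: "'k set"
  assumes val: "valuation v"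
    and res: "residue_map v \<pi>"
    and char: "(2::'f) \<noteq> 0"
    and hens: "two_henselian v \<pi>"
    and pan: "pseudo_angular v \<pi> pan"
    and subA: "subring_set A"
    and BA: "val_ring v \<subseteq> A"
  shows "bij_betw (Theta v pan A) (qq_modules A) (fam_T v A)
    \<and> (\<forall>M\<in>fam_T v A. Theta_inv v pan A M \<in> qq_modules A \<and> Theta v pan A (Theta_inv v pan A M) = M)
    \<and> (\<forall>\<M>\<in>qq_modules A. Theta_inv v pan A (Theta v pan A \<M>) = \<M>)"
proof -
  interpret VF v \<pi> pan A using val res char pan subA BA by unfold_locales
  show ?thesis by (rule main)
qed

end
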